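(* Let $\Omega$ be a locally compact metrisable space and $\{\mu_n\}_{n\in\mathbb{N}}\cup\{\mu\}\subset\mathcal{M}(\Omega)$. Then $\mu_n^+\to\mu^+$ weakly and $\mu_n^-\to\mu^-$ weakly if and only if $\mu_n\to\mu$ vaguely and $\limsup_{n\to\infty}\|\mu_n\|\le\|\mu\|$.
   Context: $\Omega$ carries its Borel $\sigma$-algebra. $\mathcal{M}(\Omega)$ denotes the set of finite signed Radon measures on $\Omega$: finite signed Borel measures $\mu$ with Hahn–Jordan decomposition $\mu=\mu^+-\mu^-$ whose variation $|\mu|=\mu^++\mu^-$ satisfies $|\mu|(A)=\sup\{|\mu|(K):K\subset A,\ K\text{ compact}\}$ for all Borel $A$; $\|\mu\|=|\mu|(\Omega)$. Weak convergence $\nu_n\to\nu$ means $\int f\,d\nu_n\to\int f\,d\nu$ for all bounded continuous $f:\Omega\to\mathbb{R}$; vague convergence means the same for all continuous $f$ with compact support. *)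

theory Defs
  imports "HOL-Analysis.Analysis"
begin

definition signed_measure :: "('a::topological_space set \<Rightarrow> real) \<Rightarrow> bool" where
  "signed_measure \<mu> \<longleftrightarrow> \<mu> {} = 0 \<and>
     (\<forall>A::nat \<Rightarrow> 'a set. range A \<subseteq> sets borel \<longrightarrow> disjoint_family A \<longrightarrow>
        (\<lambda>n. \<mu> (A n)) sums \<mu> (\<Union>n. A n))"

definition pos_part :: "('a::topological_space set \<Rightarrow> real) \<Rightarrow> 'a measure" where
  "pos_part \<mu> = measure_of UNIV (sets borel)
     (\<lambda>A. SUP B\<in>{B\<in>sets borel. B \<subseteq> A}. ennreal (\<mu> B))"

definition neg_part :: "('a::topological_space set \<Rightarrow> real) \<Rightarrow> 'a measure" where
  "neg_part \<mu> = pos_part (\<lambda>A. - \<mu> A)"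

definition signed_radon :: "('a::topological_space set \<Rightarrow> real) \<Rightarrow> bool" where
  "signed_radon \<mu> \<longleftrightarrow> signed_measure \<mu> \<and>
     (\<forall>A\<in>sets borel. emeasure (pos_part \<mu>) A + emeasure (neg_part \<mu>) A =
        (SUP K\<in>{K. K \<subseteq> A \<and> compact K}. emeasure (pos_part \<mu>) K + emeasure (neg_part \<mu>) K))"

definition tv_norm :: "('a::topological_space set \<Rightarrow> real) \<Rightarrow> real" where
  "tv_norm \<mu> = measure (pos_part \<mu>) UNIV + measure (neg_part \<mu>) UNIV"

definition signed_integral :: "('a::topological_space set \<Rightarrow> real) \<Rightarrow> ('a \<Rightarrow> real) \<Rightarrow> real" where
  "signed_integral \<mu> f = integral\<^sup>L (pos_part \<mu>) f - integral\<^sup>L (neg_part \<mu>) f"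

definition weak_conv :: "(nat \<Rightarrow> 'a::topological_space measure) \<Rightarrow> 'a measure \<Rightarrow> bool" where
  "weak_conv M N \<longleftrightarrow> (\<forall>f::'a \<Rightarrow> real. continuous_on UNIV f \<longrightarrow> bounded (range f) \<longrightarrow>
       (\<lambda>n. integral\<^sup>L (M n) f) \<longlonglongrightarrow> integral\<^sup>L N f)"

definition vague_conv :: "(nat \<Rightarrow> 'a::topological_space set \<Rightarrow> real) \<Rightarrow> ('a set \<Rightarrow> real) \<Rightarrow> bool" where
  "vague_conv \<mu>s \<mu> \<longleftrightarrow> (\<forall>f::'a \<Rightarrow> real. continuous_on UNIV f \<longrightarrow>
       compact (closure {x. f x \<noteq> 0}) \<longrightarrow>
       (\<lambda>n. signed_integral (\<mu>s n) f) \<longlonglongrightarrow> signed_integral \<mu> f)"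

end

theory Submission
  imports Defs
begin


lemma cs_urysohn:
  fixes K1 K2 :: "'a::metric_space set"
  assumes lc: "locally_compact_space (euclidean::'a topology)" and "compact K1" "compact K2" "K1 \<inter> K2 = {}"
  obtains h :: "'a \<Rightarrow> real" where "continuous_on UNIV h" "compact (closure {x. h x \<noteq> 0})" "\<And>x. \<bar>h x\<bar> \<le> 1"
    "\<And>x. x\<in>K1 \<Longrightarrow> h x = 1" "\<And>x. x\<in>K2 \<Longrightarrow> h x = -1"
proof -
  have "compactin euclidean (K1 \<union> K2)" using assms by (simp add: compact_Un)
  then obtain U L where UL: "openin euclidean U" "compactin euclidean L" "closedin euclidean L" "K1 \<union> K2 \<subseteq> U" "U \<subseteq> L"
    using lc locally_compact_space_compact_closed_compact[of euclidean] Hausdorff_space_euclidean by metis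
  have N: "normal_space (euclidean::'a topology)"
    by (simp add: metrizable_imp_normal_space metrizable_space_euclidean)
  obtain f where f: "continuous_map euclidean (top_of_set {-1..1::real}) f" "f ` K2 \<subseteq> {-1}" "f ` K1 \<subseteq> {1}"
  proof (rule Urysohn_lemma[OF N, of K2 K1 "-1" 1])
    show "closedin euclidean K2" "closedin euclidean K1" using assms by (auto intro: compact_imp_closed)
    show "disjnt K2 K1" using assms by (auto simp: disjnt_def)
  qed auto
  obtain g where g: "continuous_map euclidean (top_of_set {0..1::real}) g" "g ` (UNIV - U) \<subseteq> {0}" "g ` (K1 \<union> K2) \<subseteq> {1}"
  proof (rule Urysohn_lemma[OF N, of "UNIV - U" "K1 \<union> K2" 0 1])
    show "closedin euclidean (UNIV - U)" using UL(1) by auto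
    show "closedin euclidean (K1 \<union> K2)" using assms by (auto intro: compact_imp_closed)
    show "disjnt (UNIV - U) (K1 \<union> K2)" using UL(4) by (auto simp: disjnt_def)
  qed auto
  have fc: "continuous_on UNIV f" and fr: "\<And>x. f x \<in> {-1..1}"
    using f(1) by (auto simp: continuous_map_in_subtopology)
  have gc: "continuous_on UNIV g" and gr: "\<And>x. g x \<in> {0..1}"
    using g(1) by (auto simp: continuous_map_in_subtopology)
  show ?thesis
  proof (rule that[of "\<lambda>x. f x * g x"])
    show "continuous_on UNIV (\<lambda>x. f x * g x)" using fc gc by (intro continuous_intros)
    show "\<bar>f x * g x\<bar> \<le> 1" for x
      using fr[of x] gr[of x] by (auto simp: abs_mult intro!: mult_le_one)
    show "x \<in> K1 \<Longrightarrow> f x * g x = 1" for x using f(3) g(3) by (auto simp: image_subset_iff)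
    show "x \<in> K2 \<Longrightarrow> f x * g x = -1" for x using f(2) g(3) by (auto simp: image_subset_iff)
    have "g x = 0" if "x \<notin> U" for x using g(2) that by (auto simp: image_subset_iff)
    then have "{x. f x * g x \<noteq> 0} \<subseteq> U" by auto
    then have "{x. f x * g x \<noteq> 0} \<subseteq> L" using UL(5) by (rule order_trans)
    moreover have "closed L" using UL(3) closed_closedin by blast
    ultimately have cl: "closure {x. f x * g x \<noteq> 0} \<subseteq> L"
      by (rule closure_minimal)
    have "compact L" using UL(2) compactin_euclidean_iff by blast
    then have "compact (L \<inter> closure {x. f x * g x \<noteq> 0})"
      by (rule compact_Int_closed) simp
    then show "compact (closure {x. f x * g x \<noteq> 0})"
      using cl by (simp add: Int_absorb1)
  qed
qed



primrec iter_sel :: "('a set \<Rightarrow> 'a set) \<Rightarrow> nat \<Rightarrow> 'a set" where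
  "iter_sel s 0 = UNIV"
| "iter_sel s (Suc k) = iter_sel s k - s (iter_sel s k)"

definition pp :: "('a::topological_space set \<Rightarrow> real) \<Rightarrow> 'a set \<Rightarrow> real" where
  "pp \<mu> A = Sup (\<mu> ` {B \<in> sets borel. B \<subseteq> A})"

lemma sm_neg: "signed_measure \<mu> \<Longrightarrow> signed_measure (\<lambda>A. - \<mu> A)"
  unfolding signed_measure_def by (auto intro: sums_minus)

context
  fixes \<mu> :: "'a::topological_space set \<Rightarrow> real"
  assumes sm: "signed_measure \<mu>"
begin

lemma sm_empty: "\<mu> {} = 0"
  using sm unfolding signed_measure_def by blast

lemma sm_sums: "range A \<subseteq> sets borel \<Longrightarrow> disjoint_family A \<Longrightarrow> (\<lambda>n. \<mu> (A n)) sums \<mu> (\<Union>n. A n)"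
  using sm unfolding signed_measure_def by blast

lemma sm_add: assumes "A \<in> sets borel" "B \<in> sets borel" "A \<inter> B = {}"
  shows "\<mu> (A \<union> B) = \<mu> A + \<mu> B"
proof -
  have "range (binaryset A B) \<subseteq> sets borel" using assms by (auto simp: range_binaryset_eq)
  moreover have "disjoint_family (binaryset A B)"
    using assms by (auto simp: disjoint_family_on_def binaryset_def)
  ultimately have "(\<lambda>n. \<mu> (binaryset A B n)) sums \<mu> (A \<union> B)"
    using sm_sums UN_binaryset_eq by metis
  then show ?thesis using suminf_binaryset_eq[of \<mu> A B] sm_empty sums_unique by metis
qed

lemma sm_diff: assumes "A \<in> sets borel" "B \<in> sets borel" "B \<subseteq> A"
  shows "\<mu> (A - B) = \<mu> A - \<mu> B"
proof -
  have "A = (A - B) \<union> B" using assms by auto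
  then have "\<mu> A = \<mu> (A - B) + \<mu> B" using sm_add[of "A - B" B] assms by auto
  then show ?thesis by simp
qed

definition bdd_sm :: "'a set \<Rightarrow> bool" where
  "bdd_sm E \<longleftrightarrow> (\<exists>c. \<forall>C\<in>sets borel. C \<subseteq> E \<longrightarrow> \<bar>\<mu> C\<bar> \<le> c)"

lemma unbdd_split:
  assumes E: "E \<in> sets borel" and nb: "\<not> bdd_sm E"
  shows "\<exists>F. F \<in> sets borel \<and> F \<subseteq> E \<and> 1 \<le> \<bar>\<mu> F\<bar> \<and> \<not> bdd_sm (E - F)"
proof -
  obtain B where B: "B \<in> sets borel" "B \<subseteq> E" "\<bar>\<mu> B\<bar> > \<bar>\<mu> E\<bar> + 1"
    using nb unfolding bdd_sm_def by (meson not_le)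
  have EB: "\<mu> (E - B) = \<mu> E - \<mu> B" using sm_diff E B by auto
  show ?thesis
  proof (cases "bdd_sm (E - B)")
    case False
    then show ?thesis using B by (intro exI[of _ B]) auto
  next
    case True
    then obtain c1 where c1: "\<And>C. C\<in>sets borel \<Longrightarrow> C \<subseteq> E - B \<Longrightarrow> \<bar>\<mu> C\<bar> \<le> c1"
      unfolding bdd_sm_def by blast
    have "\<not> bdd_sm B"
    proof
      assume "bdd_sm B"
      then obtain c2 where c2: "\<And>C. C\<in>sets borel \<Longrightarrow> C \<subseteq> B \<Longrightarrow> \<bar>\<mu> C\<bar> \<le> c2"
        unfolding bdd_sm_def by blast
      have "\<bar>\<mu> C\<bar> \<le> c2 + c1" if "C \<in> sets borel" "C \<subseteq> E" for C
      proof -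
        have "C = (C \<inter> B) \<union> (C - B)" by auto
        then have "\<mu> C = \<mu> (C \<inter> B) + \<mu> (C - B)"
          using sm_add[of "C \<inter> B" "C - B"] that B by auto
        moreover have "\<bar>\<mu> (C \<inter> B)\<bar> \<le> c2" using c2 that B by auto
        moreover have "\<bar>\<mu> (C - B)\<bar> \<le> c1" using c1 that B by auto
        ultimately show ?thesis by linarith
      qed
      then show False using nb unfolding bdd_sm_def by blast
    qed
    moreover have "E - (E - B) = B" using B by auto
    ultimately show ?thesis using B E EB by (intro exI[of _ "E - B"]) auto
  qed
qed

lemma sm_bounded: "\<exists>c. \<forall>C\<in>sets borel. \<bar>\<mu> C\<bar> \<le> c"
proof (rule ccontr)
  assume nb0: "\<not> ?thesis"
  define sel where "sel E = (SOME F. F \<in> sets borel \<and> F \<subseteq> E \<and> 1 \<le> \<bar>\<mu> F\<bar> \<and> \<not> bdd_sm (E - F))" for E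
  define E where "E = iter_sel sel"
  have sel: "sel X \<in> sets borel \<and> sel X \<subseteq> X \<and> 1 \<le> \<bar>\<mu> (sel X)\<bar> \<and> \<not> bdd_sm (X - sel X)"
    if "X \<in> sets borel" "\<not> bdd_sm X" for X
    unfolding sel_def by (rule someI_ex) (rule unbdd_split[OF that])
  have inv: "E k \<in> sets borel \<and> \<not> bdd_sm (E k)" for k
  proof (induction k)
    case 0
    then show ?case using nb0 by (simp add: E_def bdd_sm_def)
  next
    case (Suc k)
    then show ?case using sel[of "E k"] by (auto simp: E_def)
  qed
  define F where "F k = sel (E k)" for k
  have F: "F k \<in> sets borel" "F k \<subseteq> E k" "1 \<le> \<bar>\<mu> (F k)\<bar>" for k
    using sel[of "E k"] inv[of k] by (auto simp: F_def)
  have "decseq E" by (rule decseq_SucI) (auto simp: E_def)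
  have disj: "disjoint_family F"
  proof -
    have *: "F i \<inter> F j = {}" if "i < j" for i j
    proof -
      have "F j \<subseteq> E (Suc i)" using F(2)[of j] decseqD[OF \<open>decseq E\<close>, of "Suc i" j] that by auto
      moreover have "E (Suc i) = E i - F i" by (simp add: E_def F_def)
      ultimately show ?thesis by auto
    qed
    show ?thesis unfolding disjoint_family_on_def
      by (metis * Int_commute linorder_neqE_nat)
  qed
  have "(\<lambda>n. \<mu> (F n)) sums \<mu> (\<Union>n. F n)" using sm_sums F(1) disj by auto
  then have "(\<lambda>n. \<mu> (F n)) \<longlonglongrightarrow> 0" using summable_LIMSEQ_zero sums_summable by blast
  then have "eventually (\<lambda>n. dist (\<mu> (F n)) 0 < 1) sequentially" by (rule tendstoD) simp
  then obtain N where "dist (\<mu> (F N)) 0 < 1" by (auto simp: eventually_sequentially)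
  then show False using F(3)[of N] by simp
qed

lemma pp_bdd: "bdd_above (\<mu> ` {B \<in> sets borel. B \<subseteq> A})"
  using sm_bounded by (auto simp: bdd_above_def) (meson abs_ge_self order_trans)

lemma pp_ne: "\<mu> ` {B \<in> sets borel. B \<subseteq> A} \<noteq> {}"
  by auto

lemma pp_upper: "B \<in> sets borel \<Longrightarrow> B \<subseteq> A \<Longrightarrow> \<mu> B \<le> pp \<mu> A"
  unfolding pp_def by (rule cSup_upper) (use pp_bdd in auto)

lemma pp_least: "(\<And>B. B \<in> sets borel \<Longrightarrow> B \<subseteq> A \<Longrightarrow> \<mu> B \<le> x) \<Longrightarrow> pp \<mu> A \<le> x"
  unfolding pp_def by (rule cSup_least) auto

lemma pp_nonneg: "0 \<le> pp \<mu> A"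
  using pp_upper[of "{}" A] sm_empty by auto

lemma pp_empty: "pp \<mu> {} = 0"
  using pp_nonneg[of "{}"] pp_least[of "{}" 0] sm_empty by force

lemma pp_mono: "A \<subseteq> A' \<Longrightarrow> pp \<mu> A \<le> pp \<mu> A'"
  by (rule pp_least) (auto intro: pp_upper)

lemma pp_super: assumes "A \<inter> A' = {}" shows "pp \<mu> A + pp \<mu> A' \<le> pp \<mu> (A \<union> A')"
proof -
  have "\<mu> B \<le> pp \<mu> (A \<union> A') - \<mu> B'" if "B \<in> sets borel" "B \<subseteq> A" "B' \<in> sets borel" "B' \<subseteq> A'" for B B'
  proof -
    have "B \<inter> B' = {}" using that assms by blast
    then have "\<mu> (B \<union> B') = \<mu> B + \<mu> B'" using sm_add that by auto
    moreover have "\<mu> (B \<union> B') \<le> pp \<mu> (A \<union> A')" using that by (intro pp_upper) auto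
    ultimately show ?thesis by linarith
  qed
  then have "pp \<mu> A \<le> pp \<mu> (A \<union> A') - \<mu> B'" if "B' \<in> sets borel" "B' \<subseteq> A'" for B'
    using that by (intro pp_least) auto
  then have "\<mu> B' \<le> pp \<mu> (A \<union> A') - pp \<mu> A" if "B' \<in> sets borel" "B' \<subseteq> A'" for B'
    using that by force
  then have "pp \<mu> A' \<le> pp \<mu> (A \<union> A') - pp \<mu> A"
    by (intro pp_least) auto
  then show ?thesis by linarith
qed

lemma pp_partial: fixes A :: "nat \<Rightarrow> 'a set" assumes "disjoint_family A"
  shows "(\<Sum>i<n. pp \<mu> (A i)) \<le> pp \<mu> (\<Union>i<n. A i)"
proof (induction n)
  case 0
  then show ?case by (simp add: pp_empty)
next
  case (Suc n)
  have "A i \<inter> A n = {}" if "i < n" for i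
    using assms that by (intro disjoint_family_onD[OF assms]) auto
  then have "(\<Union>i<n. A i) \<inter> A n = {}" by blast
  then have "pp \<mu> (\<Union>i<n. A i) + pp \<mu> (A n) \<le> pp \<mu> ((\<Union>i<n. A i) \<union> A n)" by (rule pp_super)
  moreover have "(\<Union>i<n. A i) \<union> A n = (\<Union>i<Suc n. A i)" by (auto simp: lessThan_Suc)
  ultimately show ?case using Suc by simp
qed

lemma pp_sums: fixes A :: "nat \<Rightarrow> 'a set" assumes A: "range A \<subseteq> sets borel" "disjoint_family A"
  shows "(\<lambda>i. pp \<mu> (A i)) sums pp \<mu> (\<Union>i. A i)"
proof -
  have part: "(\<Sum>i<n. pp \<mu> (A i)) \<le> pp \<mu> (\<Union>i. A i)" for n
  proof -
    have "(\<Union>i<n. A i) \<subseteq> (\<Union>i. A i)" by auto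
    then show ?thesis using pp_partial[OF A(2), of n] pp_mono[of "\<Union>i<n. A i" "\<Union>i. A i"] by linarith
  qed
  have summ: "summable (\<lambda>i. pp \<mu> (A i))"
    by (rule summableI_nonneg_bounded[OF pp_nonneg part])
  have le1: "(\<Sum>i. pp \<mu> (A i)) \<le> pp \<mu> (\<Union>i. A i)"
    by (rule suminf_le_const[OF summ part])
  have le2: "pp \<mu> (\<Union>i. A i) \<le> (\<Sum>i. pp \<mu> (A i))"
  proof (rule pp_least)
    fix B assume B: "B \<in> sets borel" "B \<subseteq> (\<Union>i. A i)"
    have "(\<lambda>i. \<mu> (B \<inter> A i)) sums \<mu> (\<Union>i. B \<inter> A i)"
      using A B by (intro sm_sums) (auto simp: disjoint_family_on_def)
    moreover have "(\<Union>i. B \<inter> A i) = B" using B by auto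
    ultimately have s: "(\<lambda>i. \<mu> (B \<inter> A i)) sums \<mu> B" by simp
    have "\<mu> (B \<inter> A i) \<le> pp \<mu> (A i)" for i
      using A B by (intro pp_upper) auto
    then show "\<mu> B \<le> (\<Sum>i. pp \<mu> (A i))"
      using sums_unique[OF s] s summ by (metis suminf_le sums_summable)
  qed
  have "(\<Sum>i. pp \<mu> (A i)) = pp \<mu> (\<Union>i. A i)" by (rule antisym[OF le1 le2])
  then show ?thesis using summable_sums[OF summ] by simp
qed

lemma SUP_eq_pp: "(SUP B\<in>{B\<in>sets borel. B \<subseteq> A}. ennreal (\<mu> B)) = ennreal (pp \<mu> A)"
proof (rule antisym)
  show "(SUP B\<in>{B\<in>sets borel. B \<subseteq> A}. ennreal (\<mu> B)) \<le> ennreal (pp \<mu> A)"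
    by (rule SUP_least) (auto intro: ennreal_leI pp_upper)
  show "ennreal (pp \<mu> A) \<le> (SUP B\<in>{B\<in>sets borel. B \<subseteq> A}. ennreal (\<mu> B))" (is "_ \<le> ?S")
  proof (rule ccontr)
    assume "\<not> ?thesis"
    then have lt: "?S < ennreal (pp \<mu> A)" by simp
    then obtain r where r: "?S = ennreal r" "0 \<le> r"
      using lt by (cases ?S rule: ennreal_cases) auto
    then have "r < pp \<mu> A" using lt by (simp add: ennreal_less_iff pp_nonneg)
    then obtain B where B: "B \<in> sets borel" "B \<subseteq> A" "r < \<mu> B"
      unfolding pp_def using less_cSup_iff[OF pp_ne pp_bdd] by auto
    then have "ennreal r < ennreal (\<mu> B)" using r by (simp add: ennreal_less_iff)
    moreover have "ennreal (\<mu> B) \<le> ?S" using B by (intro SUP_upper) auto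
    ultimately show False using r(1) by (metis leD)
  qed
qed

lemma pos_part_eq: "pos_part \<mu> = measure_of UNIV (sets borel) (\<lambda>A. ennreal (pp \<mu> A))"
  unfolding pos_part_def SUP_eq_pp ..

lemma sets_pos_part[simp]: "sets (pos_part \<mu>) = sets borel"
proof -
  have "sigma_sets UNIV (sets borel) = sets (borel::'a measure)" using sets.sigma_sets_eq[of borel] by simp
  then show ?thesis unfolding pos_part_def by (subst sets_measure_of) auto
qed

lemma space_pos_part[simp]: "space (pos_part \<mu>) = UNIV"
  unfolding pos_part_def by (simp add: space_measure_of_conv)

lemma emeasure_pos_part: assumes "A \<in> sets borel" shows "emeasure (pos_part \<mu>) A = ennreal (pp \<mu> A)"
  unfolding pos_part_eq
proof (rule emeasure_measure_of_sigma[OF _ _ _ assms])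
  show "sigma_algebra UNIV (sets borel)" using sets.sigma_algebra_axioms[of borel] by simp
  show "positive (sets borel) (\<lambda>A. ennreal (pp \<mu> A))"
    by (simp add: positive_def pp_empty)
  show "countably_additive (sets borel) (\<lambda>A. ennreal (pp \<mu> A))"
    unfolding countably_additive_def
  proof (intro allI impI)
    fix A :: "nat \<Rightarrow> 'a set" assume A: "range A \<subseteq> sets borel" "disjoint_family A"
    have s: "(\<lambda>i. pp \<mu> (A i)) sums pp \<mu> (\<Union>i. A i)" by (rule pp_sums[OF A])
    show "(\<Sum>i. ennreal (pp \<mu> (A i))) = ennreal (pp \<mu> (\<Union>i. A i))"
      using suminf_ennreal2[OF pp_nonneg sums_summable[OF s]] sums_unique[OF s] by simp
  qed
qed

lemma finite_pos_part: "finite_measure (pos_part \<mu>)"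
  by (rule finite_measureI) (simp add: emeasure_pos_part)

lemma measure_pos_part: assumes "A \<in> sets borel" shows "measure (pos_part \<mu>) A = pp \<mu> A"
  using emeasure_pos_part[OF assms] by (simp add: measure_def pp_nonneg)

end

lemma jordan: assumes sm: "signed_measure \<mu>" and A: "A \<in> sets borel" shows "\<mu> A = pp \<mu> A - pp (\<lambda>X. - \<mu> X) A"
proof -
  have "\<mu> B \<le> \<mu> A + pp (\<lambda>X. - \<mu> X) A" if "B \<in> sets borel" "B \<subseteq> A" for B
  proof -
    have "\<mu> (A - B) = \<mu> A - \<mu> B" using sm_diff[OF sm] A that by auto
    moreover have "- \<mu> (A - B) \<le> pp (\<lambda>X. - \<mu> X) A"
      using that A by (intro pp_upper[OF sm_neg[OF sm]]) auto
    ultimately show ?thesis by linarith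
  qed
  then have 1: "pp \<mu> A \<le> \<mu> A + pp (\<lambda>X. - \<mu> X) A" by (rule pp_least[OF sm])
  have "- \<mu> B \<le> pp \<mu> A - \<mu> A" if "B \<in> sets borel" "B \<subseteq> A" for B
  proof -
    have "\<mu> (A - B) = \<mu> A - \<mu> B" using sm_diff[OF sm] A that by auto
    moreover have "\<mu> (A - B) \<le> pp \<mu> A" using that A by (intro pp_upper[OF sm]) auto
    ultimately show ?thesis by linarith
  qed
  then have 2: "pp (\<lambda>X. - \<mu> X) A \<le> pp \<mu> A - \<mu> A"
    using pp_least[OF sm_neg[OF sm]] by blast
  show ?thesis using 1 2 by linarith
qed




lemma intg:
  fixes u :: "'a::topological_space \<Rightarrow> real"
  assumes "finite_measure M" "sets M = sets borel" "continuous_on UNIV u" "\<And>x. \<bar>u x\<bar> \<le> b"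
  shows "integrable M u"
proof -
  have "u \<in> borel_measurable borel"
    using borel_measurable_continuous_onI[OF assms(3)] .
  then have "u \<in> borel_measurable M"
    by (subst measurable_cong_sets[OF assms(2) refl])
  then show ?thesis
    using assms by (intro finite_measure.integrable_const_bound[where B=b]) auto
qed

lemma abs_int_le:
  fixes u v :: "'a \<Rightarrow> real"
  assumes "integrable M u" "integrable M v" "\<And>x. \<bar>u x\<bar> \<le> v x"
  shows "\<bar>integral\<^sup>L M u\<bar> \<le> integral\<^sup>L M v"
proof -
  have "integral\<^sup>L M u \<le> integral\<^sup>L M v" using assms by (intro integral_mono) (auto simp: abs_le_iff)
  moreover have "integral\<^sup>L M (\<lambda>x. - u x) \<le> integral\<^sup>L M v" using assms by (intro integral_mono) (auto simp: abs_le_iff)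
  ultimately show ?thesis by auto
qed

lemma cs_sub:
  assumes "compact (closure S)" "T \<subseteq> S" shows "compact (closure T)"
proof -
  have "closure T \<subseteq> closure S" using assms(2) by (rule closure_mono)
  then have "closure S \<inter> closure T = closure T" by blast
  moreover have "compact (closure S \<inter> closure T)" using assms(1) by (rule compact_Int_closed) simp
  ultimately show ?thesis by simp
qed

lemma est:
  fixes f h :: "'a::topological_space \<Rightarrow> real"
  assumes M1: "finite_measure M1" "sets M1 = sets borel" and M2: "finite_measure M2" "sets M2 = sets borel"
    and f: "continuous_on UNIV f" "\<And>x. \<bar>f x\<bar> \<le> B"
    and h: "continuous_on UNIV h" "\<And>x. \<bar>h x\<bar> \<le> 1"
  shows "\<bar>integral\<^sup>L M1 f - (integral\<^sup>L M1 (\<lambda>x. f x * max (h x) 0) - integral\<^sup>L M2 (\<lambda>x. f x * max (h x) 0))\<bar>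
     \<le> B * (integral\<^sup>L M1 (\<lambda>x. 1 - h x) + integral\<^sup>L M2 (\<lambda>x. 1 + h x))"
proof -
  have B: "0 \<le> B" using f(2)[of undefined] by simp
  have hb: "-1 \<le> h x" "h x \<le> 1" for x using h(2)[of x] by auto
  have cg: "continuous_on UNIV (\<lambda>x. max (h x) 0)" using h(1) by (intro continuous_intros)
  have cfg: "continuous_on UNIV (\<lambda>x. f x * max (h x) 0)" using f(1) h(1) by (intro continuous_intros)
  have cfg': "continuous_on UNIV (\<lambda>x. f x * (1 - max (h x) 0))" using f(1) h(1) by (intro continuous_intros)
  have bfg: "\<bar>f x * max (h x) 0\<bar> \<le> B" for x
  proof -
    have "\<bar>f x * max (h x) 0\<bar> = \<bar>f x\<bar> * \<bar>max (h x) 0\<bar>" by (simp add: abs_mult)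
    also have "\<dots> \<le> B * 1" using f(2)[of x] hb[of x] B by (intro mult_mono) auto
    finally show ?thesis by simp
  qed
  have bfg': "\<bar>f x * (1 - max (h x) 0)\<bar> \<le> 2 * B" for x
  proof -
    have "\<bar>f x * (1 - max (h x) 0)\<bar> = \<bar>f x\<bar> * \<bar>1 - max (h x) 0\<bar>" by (simp add: abs_mult)
    also have "\<dots> \<le> B * 2" using f(2)[of x] hb[of x] B by (intro mult_mono) auto
    finally show ?thesis by simp
  qed
  have c1h: "continuous_on UNIV (\<lambda>x. 1 - h x)" "continuous_on UNIV (\<lambda>x. 1 + h x)"
    using h(1) by (auto intro!: continuous_intros)
  have b1h: "\<bar>1 - h x\<bar> \<le> 2" "\<bar>1 + h x\<bar> \<le> 2" for x using hb[of x] by auto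
  have i1: "integrable M1 f" "integrable M1 (\<lambda>x. f x * max (h x) 0)" "integrable M1 (\<lambda>x. f x * (1 - max (h x) 0))"
    "integrable M1 (\<lambda>x. 1 - h x)"
    using intg[OF M1 f] intg[OF M1 cfg bfg] intg[OF M1 cfg' bfg'] 
      intg[OF M1 c1h(1) b1h(1)] by auto
  have i2: "integrable M2 (\<lambda>x. f x * max (h x) 0)" "integrable M2 (\<lambda>x. 1 + h x)"
    using intg[OF M2 cfg bfg] intg[OF M2 c1h(2) b1h(2)] by auto
  have e1: "integral\<^sup>L M1 f - integral\<^sup>L M1 (\<lambda>x. f x * max (h x) 0) = integral\<^sup>L M1 (\<lambda>x. f x * (1 - max (h x) 0))"
  proof -
    have "(\<lambda>x. f x * (1 - max (h x) 0)) = (\<lambda>x. f x - f x * max (h x) 0)"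
      by (simp add: right_diff_distrib)
    then show ?thesis using Bochner_Integration.integral_diff[OF i1(1) i1(2)] by simp
  qed
  have b1: "\<bar>integral\<^sup>L M1 (\<lambda>x. f x * (1 - max (h x) 0))\<bar> \<le> integral\<^sup>L M1 (\<lambda>x. B * (1 - h x))"
  proof (rule abs_int_le)
    show "integrable M1 (\<lambda>x. B * (1 - h x))" using i1 by auto
    show "\<bar>f x * (1 - max (h x) 0)\<bar> \<le> B * (1 - h x)" for x
    proof -
      have "\<bar>f x * (1 - max (h x) 0)\<bar> = \<bar>f x\<bar> * (1 - max (h x) 0)" using hb[of x] by (simp add: abs_mult)
      also have "\<dots> \<le> B * (1 - h x)" using f(2)[of x] hb[of x] B by (intro mult_mono) auto
      finally show ?thesis .
    qed
  qed (use i1 in auto)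
  have b2: "\<bar>integral\<^sup>L M2 (\<lambda>x. f x * max (h x) 0)\<bar> \<le> integral\<^sup>L M2 (\<lambda>x. B * (1 + h x))"
  proof (rule abs_int_le)
    show "integrable M2 (\<lambda>x. B * (1 + h x))" using i2 by auto
    show "\<bar>f x * max (h x) 0\<bar> \<le> B * (1 + h x)" for x
    proof -
      have "\<bar>f x * max (h x) 0\<bar> = \<bar>f x\<bar> * max (h x) 0" by (simp add: abs_mult)
      also have "\<dots> \<le> B * (1 + h x)" using f(2)[of x] hb[of x] B by (intro mult_mono) auto
      finally show ?thesis .
    qed
  qed (use i2 in auto)
  have m1: "integral\<^sup>L M1 (\<lambda>x. B * (1 - h x)) = B * integral\<^sup>L M1 (\<lambda>x. 1 - h x)" by simp
  have m2: "integral\<^sup>L M2 (\<lambda>x. B * (1 + h x)) = B * integral\<^sup>L M2 (\<lambda>x. 1 + h x)" by simp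
  define a where "a = integral\<^sup>L M1 f"
  define c where "c = integral\<^sup>L M1 (\<lambda>x. f x * max (h x) 0)"
  define d where "d = integral\<^sup>L M2 (\<lambda>x. f x * max (h x) 0)"
  define e where "e = integral\<^sup>L M1 (\<lambda>x. f x * (1 - max (h x) 0))"
  have "a - (c - d) = e + d" using e1 by (simp add: a_def c_def d_def e_def)
  moreover have "\<bar>e + d\<bar> \<le> \<bar>e\<bar> + \<bar>d\<bar>" by (rule abs_triangle_ineq)
  ultimately show ?thesis using b1 b2 m1 m2 unfolding a_def[symmetric] c_def[symmetric] d_def[symmetric] e_def[symmetric]
    by (simp add: distrib_left)
qed

lemma D_eq:
  fixes h :: "'a::topological_space \<Rightarrow> real"
  assumes M1: "finite_measure M1" "sets M1 = sets borel" and M2: "finite_measure M2" "sets M2 = sets borel"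
    and h: "continuous_on UNIV h" "\<And>x. \<bar>h x\<bar> \<le> 1"
  shows "integral\<^sup>L M1 (\<lambda>x. 1 - h x) + integral\<^sup>L M2 (\<lambda>x. 1 + h x)
     = measure M1 UNIV + measure M2 UNIV - (integral\<^sup>L M1 h - integral\<^sup>L M2 h)"
proof -
  have "integrable M1 h" "integrable M2 h" using intg[OF M1 h] intg[OF M2 h] by auto
  moreover have "space M1 = UNIV" "space M2 = UNIV"
    using sets_eq_imp_space_eq[OF M1(2)] sets_eq_imp_space_eq[OF M2(2)] by auto
  moreover have "integrable M1 (\<lambda>x. 1::real)" "integrable M2 (\<lambda>x. 1::real)"
    using M1(1) M2(1) finite_measure.integrable_const by blast+
  ultimately show ?thesis by (simp add: integral_diff integral_add)
qed



lemma core: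
  fixes P N :: "'a::topological_space measure" and Pn Nn :: "nat \<Rightarrow> 'a measure"
  assumes fP: "finite_measure P" "sets P = sets borel" and fN: "finite_measure N" "sets N = sets borel"
    and fPn: "\<And>n. finite_measure (Pn n)" "\<And>n. sets (Pn n) = sets borel"
    and fNn: "\<And>n. finite_measure (Nn n)" "\<And>n. sets (Nn n) = sets borel"
    and vague: "\<And>f::'a \<Rightarrow> real. continuous_on UNIV f \<Longrightarrow> compact (closure {x. f x \<noteq> 0}) \<Longrightarrow>
        (\<lambda>n. integral\<^sup>L (Pn n) f - integral\<^sup>L (Nn n) f) \<longlonglongrightarrow> integral\<^sup>L P f - integral\<^sup>L N f"
    and ls: "limsup (\<lambda>n. ereal (measure (Pn n) UNIV + measure (Nn n) UNIV)) \<le> ereal (measure P UNIV + measure N UNIV)"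
    and approx: "\<And>e. e > 0 \<Longrightarrow> \<exists>h::'a \<Rightarrow> real. continuous_on UNIV h \<and> compact (closure {x. h x \<noteq> 0}) \<and> (\<forall>x. \<bar>h x\<bar> \<le> 1) \<and>
        integral\<^sup>L P (\<lambda>x. 1 - h x) + integral\<^sup>L N (\<lambda>x. 1 + h x) \<le> e"
  shows "weak_conv Pn P"
  unfolding weak_conv_def
proof (intro allI impI)
  fix f :: "'a \<Rightarrow> real" assume fc: "continuous_on UNIV f" and fb: "bounded (range f)"
  obtain B0 where B0: "\<And>x. \<bar>f x\<bar> \<le> B0" using fb by (auto simp: bounded_real)
  define B where "B = max B0 1"
  have B: "\<And>x. \<bar>f x\<bar> \<le> B" "B > 0" using B0 by (auto simp: B_def intro: le_max_iff_disj[THEN iffD2])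
  define T where "T = measure P UNIV + measure N UNIV"
  show "(\<lambda>n. integral\<^sup>L (Pn n) f) \<longlonglongrightarrow> integral\<^sup>L P f"
  proof (rule LIMSEQ_I)
    fix r :: real assume r: "0 < r"
    define \<epsilon> where "\<epsilon> = r / (4*B + 2)"
    have \<epsilon>: "\<epsilon> > 0" using r B by (simp add: \<epsilon>_def)
    have r\<epsilon>: "r = (4*B+2) * \<epsilon>" using B by (simp add: \<epsilon>_def)
    obtain h where hc: "continuous_on UNIV h" and hs: "compact (closure {x. h x \<noteq> 0})"
      and hb: "\<And>x. \<bar>h x\<bar> \<le> 1" and hD: "integral\<^sup>L P (\<lambda>x. 1 - h x) + integral\<^sup>L N (\<lambda>x. 1 + h x) \<le> \<epsilon>"
      using approx[OF \<epsilon>] by blast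
    define fg where "fg = (\<lambda>x. f x * max (h x) 0)"
    have fgc: "continuous_on UNIV fg" unfolding fg_def using fc hc by (intro continuous_intros)
    have fgs: "compact (closure {x. fg x \<noteq> 0})" by (rule cs_sub[OF hs]) (auto simp: fg_def)
    have ev1: "eventually (\<lambda>n. dist (integral\<^sup>L (Pn n) h - integral\<^sup>L (Nn n) h) (integral\<^sup>L P h - integral\<^sup>L N h) < \<epsilon>) sequentially"
      by (rule tendstoD[OF vague[OF hc hs] \<epsilon>])
    have ev2: "eventually (\<lambda>n. dist (integral\<^sup>L (Pn n) fg - integral\<^sup>L (Nn n) fg) (integral\<^sup>L P fg - integral\<^sup>L N fg) < \<epsilon>) sequentially"
      by (rule tendstoD[OF vague[OF fgc fgs] \<epsilon>])
    have "limsup (\<lambda>n. ereal (measure (Pn n) UNIV + measure (Nn n) UNIV)) < ereal (T + \<epsilon>)"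
    proof -
      have "ereal T < ereal (T + \<epsilon>)" using \<epsilon> by simp
      then show ?thesis using ls unfolding T_def by (rule le_less_trans[rotated])
    qed
    then have ev3: "eventually (\<lambda>n. ereal (measure (Pn n) UNIV + measure (Nn n) UNIV) < ereal (T + \<epsilon>)) sequentially"
      by (rule Limsup_lessD)
    obtain N0 where N0: "\<And>n. n \<ge> N0 \<Longrightarrow>
        dist (integral\<^sup>L (Pn n) h - integral\<^sup>L (Nn n) h) (integral\<^sup>L P h - integral\<^sup>L N h) < \<epsilon> \<and>
        dist (integral\<^sup>L (Pn n) fg - integral\<^sup>L (Nn n) fg) (integral\<^sup>L P fg - integral\<^sup>L N fg) < \<epsilon> \<and>
        ereal (measure (Pn n) UNIV + measure (Nn n) UNIV) < ereal (T + \<epsilon>)"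
      using eventually_conj[OF ev1 eventually_conj[OF ev2 ev3]] unfolding eventually_sequentially by blast
    show "\<exists>no. \<forall>n\<ge>no. norm (integral\<^sup>L (Pn n) f - integral\<^sup>L P f) < r"
    proof (intro exI allI impI)
      fix n assume n: "N0 \<le> n"
      note N0n = N0[OF n]
      have a1: "\<bar>(integral\<^sup>L (Pn n) h - integral\<^sup>L (Nn n) h) - (integral\<^sup>L P h - integral\<^sup>L N h)\<bar> < \<epsilon>"
        using N0n by (simp add: dist_real_def)
      have a2: "\<bar>(integral\<^sup>L (Pn n) fg - integral\<^sup>L (Nn n) fg) - (integral\<^sup>L P fg - integral\<^sup>L N fg)\<bar> < \<epsilon>"
        using N0n by (simp add: dist_real_def)
      have a3: "measure (Pn n) UNIV + measure (Nn n) UNIV < T + \<epsilon>" using N0n by simp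
      have Dn: "integral\<^sup>L (Pn n) (\<lambda>x. 1 - h x) + integral\<^sup>L (Nn n) (\<lambda>x. 1 + h x)
         = measure (Pn n) UNIV + measure (Nn n) UNIV - (integral\<^sup>L (Pn n) h - integral\<^sup>L (Nn n) h)"
        by (rule D_eq[OF fPn(1) fPn(2) fNn(1) fNn(2) hc hb])
      have D: "integral\<^sup>L P (\<lambda>x. 1 - h x) + integral\<^sup>L N (\<lambda>x. 1 + h x)
         = T - (integral\<^sup>L P h - integral\<^sup>L N h)"
        unfolding T_def by (rule D_eq[OF fP fN hc hb])
      have Dn3: "integral\<^sup>L (Pn n) (\<lambda>x. 1 - h x) + integral\<^sup>L (Nn n) (\<lambda>x. 1 + h x) \<le> 3 * \<epsilon>"
        using Dn D hD a1 a3 by linarith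
      have e1: "\<bar>integral\<^sup>L (Pn n) f - (integral\<^sup>L (Pn n) fg - integral\<^sup>L (Nn n) fg)\<bar>
          \<le> B * (integral\<^sup>L (Pn n) (\<lambda>x. 1 - h x) + integral\<^sup>L (Nn n) (\<lambda>x. 1 + h x))"
        unfolding fg_def by (rule est[OF fPn(1) fPn(2) fNn(1) fNn(2) fc B(1) hc hb])
      have e2: "\<bar>integral\<^sup>L P f - (integral\<^sup>L P fg - integral\<^sup>L N fg)\<bar>
          \<le> B * (integral\<^sup>L P (\<lambda>x. 1 - h x) + integral\<^sup>L N (\<lambda>x. 1 + h x))"
        unfolding fg_def by (rule est[OF fP fN fc B(1) hc hb])
      have m1: "B * (integral\<^sup>L (Pn n) (\<lambda>x. 1 - h x) + integral\<^sup>L (Nn n) (\<lambda>x. 1 + h x)) \<le> B * (3 * \<epsilon>)"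
        using Dn3 B(2) by (intro mult_left_mono) auto
      have m2: "B * (integral\<^sup>L P (\<lambda>x. 1 - h x) + integral\<^sup>L N (\<lambda>x. 1 + h x)) \<le> B * \<epsilon>"
        using hD B(2) by (intro mult_left_mono) auto
      have "\<bar>integral\<^sup>L (Pn n) f - integral\<^sup>L P f\<bar> \<le> B * (3 * \<epsilon>) + \<epsilon> + B * \<epsilon>"
        using e1 e2 m1 m2 a2 by linarith
      also have "\<dots> < r" using r\<epsilon> \<epsilon> by (simp add: algebra_simps)
      finally show "norm (integral\<^sup>L (Pn n) f - integral\<^sup>L P f) < r" by simp
    qed
  qed
qed



lemma inner:
  fixes P N :: "'a::metric_space measure"
  assumes fP: "finite_measure P" and fN: "finite_measure N"
    and rad: "emeasure P A + emeasure N A = (SUP K\<in>{K. K \<subseteq> A \<and> compact K}. emeasure P K + emeasure N K)"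
    and sP: "sets P = sets borel" and sN: "sets N = sets borel"
    and A: "A \<in> sets borel" and e: "\<epsilon> > 0"
  shows "\<exists>K. compact K \<and> K \<subseteq> A \<and> measure P (A - K) + measure N (A - K) < \<epsilon>"
proof (cases "measure P A + measure N A < \<epsilon>")
  case True
  then show ?thesis by (intro exI[of _ "{}"]) auto
next
  case False
  define s where "s = measure P A + measure N A"
  have eqm: "emeasure P X + emeasure N X = ennreal (measure P X + measure N X)" for X
    using finite_measure.emeasure_eq_measure[OF fP] finite_measure.emeasure_eq_measure[OF fN]
    by (simp add: ennreal_plus)
  have "ennreal (s - \<epsilon>) < ennreal s" using False e by (intro ennreal_lessI) (auto simp: s_def)
  also have "\<dots> = (SUP K\<in>{K. K \<subseteq> A \<and> compact K}. emeasure P K + emeasure N K)"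
    using rad eqm[of A] by (simp add: s_def)
  finally obtain K where K: "K \<subseteq> A" "compact K" "ennreal (s - \<epsilon>) < emeasure P K + emeasure N K"
    by (auto simp: less_SUP_iff)
  have lt: "ennreal (s - \<epsilon>) < ennreal (measure P K + measure N K)" using K(3) eqm[of K] by metis
  have "0 \<le> s - \<epsilon>" using False by (simp add: s_def)
  then have "s - \<epsilon> < measure P K + measure N K"
    using lt ennreal_less_iff by blast
  moreover have "K \<in> sets borel" using K(2) by (simp add: compact_imp_closed borel_closed)
  then have "measure P (A - K) = measure P A - measure P K" "measure N (A - K) = measure N A - measure N K"
    using finite_measure.finite_measure_Diff[OF fP, of A K] finite_measure.finite_measure_Diff[OF fN, of A K]
      A K(1) sP sN by auto
  ultimately show ?thesis using K by (intro exI[of _ K]) (auto simp: s_def)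
qed

lemma approx_h:
  fixes \<mu> :: "'a::metric_space set \<Rightarrow> real"
  assumes lc: "locally_compact_space (euclidean :: 'a topology)" and rad: "signed_radon \<mu>" and e: "e > 0"
  shows "\<exists>h::'a \<Rightarrow> real. continuous_on UNIV h \<and> compact (closure {x. h x \<noteq> 0}) \<and> (\<forall>x. \<bar>h x\<bar> \<le> 1) \<and>
     integral\<^sup>L (pos_part \<mu>) (\<lambda>x. 1 - h x) + integral\<^sup>L (neg_part \<mu>) (\<lambda>x. 1 + h x) \<le> e"
proof -
  have sm: "signed_measure \<mu>" using rad by (simp add: signed_radon_def)
  have radA: "\<And>A. A \<in> sets borel \<Longrightarrow> emeasure (pos_part \<mu>) A + emeasure (neg_part \<mu>) A =
        (SUP K\<in>{K. K \<subseteq> A \<and> compact K}. emeasure (pos_part \<mu>) K + emeasure (neg_part \<mu>) K)"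
    using rad by (simp add: signed_radon_def)
  define P where "P = pos_part \<mu>"
  define N where "N = neg_part \<mu>"
  have NP: "N = pos_part (\<lambda>A. - \<mu> A)" by (simp add: N_def neg_part_def)
  have fP: "finite_measure P" "sets P = sets borel" "space P = UNIV"
    using finite_pos_part[OF sm] sets_pos_part[OF sm] space_pos_part[OF sm] by (auto simp: P_def)
  have fN: "finite_measure N" "sets N = sets borel" "space N = UNIV"
    using finite_pos_part[OF sm_neg[OF sm]] sets_pos_part[OF sm_neg[OF sm]] space_pos_part[OF sm_neg[OF sm]]
    by (auto simp: NP)
  have mP: "\<And>A. A \<in> sets borel \<Longrightarrow> measure P A = pp \<mu> A"
    using measure_pos_part[OF sm] by (simp add: P_def)
  have mN: "\<And>A. A \<in> sets borel \<Longrightarrow> measure N A = pp (\<lambda>A. - \<mu> A) A"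
    using measure_pos_part[OF sm_neg[OF sm]] by (simp add: NP)
  have jor: "\<And>A. A \<in> sets borel \<Longrightarrow> \<mu> A = measure P A - measure N A"
    using jordan[OF sm] mP mN by simp
  define \<epsilon> where "\<epsilon> = e / 8"
  have \<epsilon>: "\<epsilon> > 0" using e by (simp add: \<epsilon>_def)
  have "pp \<mu> UNIV - \<epsilon> < pp \<mu> UNIV" using \<epsilon> by simp
  then have "pp \<mu> UNIV - \<epsilon> < Sup (\<mu> ` {B \<in> sets borel. B \<subseteq> UNIV})" by (simp only: pp_def)
  then obtain B where B: "B \<in> sets borel" "pp \<mu> UNIV - \<epsilon> < \<mu> B"
    using less_cSup_iff[OF pp_ne[OF sm] pp_bdd[OF sm]] by blast
  have UB: "UNIV - B \<in> sets borel" using B(1) by auto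
  have "measure P (B \<union> (UNIV - B)) = measure P B + measure P (UNIV - B)"
    using finite_measure.finite_measure_Union[OF fP(1), of B "UNIV - B"] B(1) UB fP(2) by auto
  then have PU: "measure P UNIV = measure P B + measure P (UNIV - B)" by simp
  have small1: "measure P (UNIV - B) + measure N B < \<epsilon>"
    using PU B(2) jor[OF B(1)] mP[of UNIV] by simp
  obtain K1 where K1: "compact K1" "K1 \<subseteq> B" "measure P (B - K1) + measure N (B - K1) < \<epsilon>"
    using inner[OF fP(1) fN(1) radA[OF B(1), folded P_def N_def] fP(2) fN(2) B(1) \<epsilon>] by blast
  obtain K2 where K2: "compact K2" "K2 \<subseteq> UNIV - B" "measure P ((UNIV - B) - K2) + measure N ((UNIV - B) - K2) < \<epsilon>"
    using inner[OF fP(1) fN(1) radA[OF UB, folded P_def N_def] fP(2) fN(2) UB \<epsilon>] by blast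
  have K12: "K1 \<inter> K2 = {}" using K1(2) K2(2) by auto
  obtain h :: "'a \<Rightarrow> real" where hc: "continuous_on UNIV h" and hs: "compact (closure {x. h x \<noteq> 0})"
    and hb: "\<And>x. \<bar>h x\<bar> \<le> 1" and h1: "\<And>x. x \<in> K1 \<Longrightarrow> h x = 1" and h2: "\<And>x. x \<in> K2 \<Longrightarrow> h x = -1"
    using cs_urysohn[OF lc K1(1) K2(1) K12] by blast
  have K1b: "K1 \<in> sets borel" "K2 \<in> sets borel" using K1(1) K2(1) by (auto simp: compact_imp_closed borel_closed)
  have c1h: "continuous_on UNIV (\<lambda>x. 1 - h x)" "continuous_on UNIV (\<lambda>x. 1 + h x)"
    using hc by (auto intro!: continuous_intros)
  have b1h: "\<bar>1 - h x\<bar> \<le> 2" "\<bar>1 + h x\<bar> \<le> 2" for x using hb[of x] by auto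
  have I1: "integral\<^sup>L P (\<lambda>x. 1 - h x) \<le> integral\<^sup>L P (\<lambda>x. 2 * indicator (UNIV - K1) x)"
  proof (rule integral_mono)
    show "integrable P (\<lambda>x. 1 - h x)" by (rule intg[OF fP(1) fP(2) c1h(1) b1h(1)])
    show "integrable P (\<lambda>x. 2 * indicator (UNIV - K1) x :: real)"
      using K1b fP finite_measure.emeasure_finite[OF fP(1)] by (intro integrable_mult_right integrable_real_indicator) (auto simp: top.not_eq_extremum)
    show "1 - h x \<le> 2 * indicator (UNIV - K1) x" for x
      using h1[of x] hb[of x] by (auto simp: indicator_def)
  qed
  have I2: "integral\<^sup>L N (\<lambda>x. 1 + h x) \<le> integral\<^sup>L N (\<lambda>x. 2 * indicator (UNIV - K2) x)"
  proof (rule integral_mono)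
    show "integrable N (\<lambda>x. 1 + h x)" by (rule intg[OF fN(1) fN(2) c1h(2) b1h(2)])
    show "integrable N (\<lambda>x. 2 * indicator (UNIV - K2) x :: real)"
      using K1b fN finite_measure.emeasure_finite[OF fN(1)] by (intro integrable_mult_right integrable_real_indicator) (auto simp: top.not_eq_extremum)
    show "1 + h x \<le> 2 * indicator (UNIV - K2) x" for x
      using h2[of x] hb[of x] by (auto simp: indicator_def)
  qed
  have J1: "integral\<^sup>L P (\<lambda>x. 2 * indicator (UNIV - K1) x) = 2 * measure P (UNIV - K1)"
    using fP(3) by simp
  have J2: "integral\<^sup>L N (\<lambda>x. 2 * indicator (UNIV - K2) x) = 2 * measure N (UNIV - K2)"
    using fN(3) by simp
  have "UNIV - K1 = (UNIV - B) \<union> (B - K1)" using K1(2) by auto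
  then have L1: "measure P (UNIV - K1) = measure P (UNIV - B) + measure P (B - K1)"
    using finite_measure.finite_measure_Union[OF fP(1), of "UNIV - B" "B - K1"] B(1) K1b fP(2) by auto
  have "UNIV - K2 = B \<union> ((UNIV - B) - K2)" using K2(2) by auto
  then have L2: "measure N (UNIV - K2) = measure N B + measure N ((UNIV - B) - K2)"
    using finite_measure.finite_measure_Union[OF fN(1), of B "(UNIV - B) - K2"] B(1) K1b fN(2) by auto
  have nn: "0 \<le> measure P (B - K1)" "0 \<le> measure N (B - K1)" "0 \<le> measure P ((UNIV - B) - K2)" "0 \<le> measure N ((UNIV - B) - K2)"
    by auto
  have "integral\<^sup>L P (\<lambda>x. 1 - h x) + integral\<^sup>L N (\<lambda>x. 1 + h x) \<le> 6 * \<epsilon>"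
    using I1 I2 J1 J2 L1 L2 small1 K1(3) K2(3) nn by linarith
  also have "\<dots> \<le> e" using e by (simp add: \<epsilon>_def)
  finally show ?thesis using hc hs hb unfolding P_def N_def by blast
qed



lemma cs_bounded:
  fixes f :: "'a::metric_space \<Rightarrow> real"
  assumes "continuous_on UNIV f" "compact (closure {x. f x \<noteq> 0})"
  shows "bounded (range f)"
proof -
  have "compact (f ` closure {x. f x \<noteq> 0})"
    using assms by (intro compact_continuous_image) (auto intro: continuous_on_subset)
  then have "bounded (insert 0 (f ` closure {x. f x \<noteq> 0}))" by (simp add: compact_imp_bounded)
  moreover have "range f \<subseteq> insert 0 (f ` closure {x. f x \<noteq> 0})"
  proof
    fix y assume "y \<in> range f"
    then obtain x where x: "y = f x" by blast
    show "y \<in> insert 0 (f ` closure {x. f x \<noteq> 0})"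
    proof (cases "f x = 0")
      case False
      then have "x \<in> closure {x. f x \<noteq> 0}" using closure_subset[of "{x. f x \<noteq> 0}"] by blast
      then show ?thesis using x by blast
    qed (use x in simp)
  qed
  ultimately show ?thesis by (rule bounded_subset)
qed

theorem proposition2p8:
  fixes \<mu>s :: "nat \<Rightarrow> 'a::metric_space set \<Rightarrow> real" and \<mu> :: "'a set \<Rightarrow> real"
  assumes "locally_compact_space (euclidean :: 'a topology)"
    and "\<And>n. signed_radon (\<mu>s n)"
    and "signed_radon \<mu>"
  shows "(weak_conv (\<lambda>n. pos_part (\<mu>s n)) (pos_part \<mu>) \<and>
          weak_conv (\<lambda>n. neg_part (\<mu>s n)) (neg_part \<mu>))
     \<longleftrightarrow> (vague_conv \<mu>s \<mu> \<and> limsup (\<lambda>n. ereal (tv_norm (\<mu>s n))) \<le> ereal (tv_norm \<mu>))"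
proof -
  note lc = assms(1)
  have sms: "\<And>n. signed_measure (\<mu>s n)" and sm: "signed_measure \<mu>"
    using assms(2,3) by (auto simp: signed_radon_def)
  have negp: "\<And>\<nu>. neg_part \<nu> = pos_part (\<lambda>A. - \<nu> A)" by (simp add: neg_part_def)
  have fPn: "\<And>n. finite_measure (pos_part (\<mu>s n))" "\<And>n. sets (pos_part (\<mu>s n)) = sets borel"
    "\<And>n. space (pos_part (\<mu>s n)) = UNIV"
    using finite_pos_part[OF sms] sets_pos_part[OF sms] space_pos_part[OF sms] by auto
  have fNn: "\<And>n. finite_measure (neg_part (\<mu>s n))" "\<And>n. sets (neg_part (\<mu>s n)) = sets borel"
    "\<And>n. space (neg_part (\<mu>s n)) = UNIV"
    unfolding negp using finite_pos_part[OF sm_neg[OF sms]] sets_pos_part[OF sm_neg[OF sms]]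
      space_pos_part[OF sm_neg[OF sms]] by auto
  have fP: "finite_measure (pos_part \<mu>)" "sets (pos_part \<mu>) = sets borel" "space (pos_part \<mu>) = UNIV"
    using finite_pos_part[OF sm] sets_pos_part[OF sm] space_pos_part[OF sm] by auto
  have fN: "finite_measure (neg_part \<mu>)" "sets (neg_part \<mu>) = sets borel" "space (neg_part \<mu>) = UNIV"
    unfolding negp using finite_pos_part[OF sm_neg[OF sm]] sets_pos_part[OF sm_neg[OF sm]]
      space_pos_part[OF sm_neg[OF sm]] by auto
  show ?thesis
  proof
    assume W: "weak_conv (\<lambda>n. pos_part (\<mu>s n)) (pos_part \<mu>) \<and> weak_conv (\<lambda>n. neg_part (\<mu>s n)) (neg_part \<mu>)"
    have WP: "\<And>f::'a \<Rightarrow> real. continuous_on UNIV f \<Longrightarrow> bounded (range f) \<Longrightarrow>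
        (\<lambda>n. integral\<^sup>L (pos_part (\<mu>s n)) f) \<longlonglongrightarrow> integral\<^sup>L (pos_part \<mu>) f"
      by (rule W[THEN conjunct1, unfolded weak_conv_def, rule_format])
    have WN: "\<And>f::'a \<Rightarrow> real. continuous_on UNIV f \<Longrightarrow> bounded (range f) \<Longrightarrow>
        (\<lambda>n. integral\<^sup>L (neg_part (\<mu>s n)) f) \<longlonglongrightarrow> integral\<^sup>L (neg_part \<mu>) f"
      by (rule W[THEN conjunct2, unfolded weak_conv_def, rule_format])
    have V: "vague_conv \<mu>s \<mu>"
      unfolding vague_conv_def signed_integral_def
    proof (intro allI impI)
      fix f :: "'a \<Rightarrow> real" assume "continuous_on UNIV f" "compact (closure {x. f x \<noteq> 0})"
      moreover then have "bounded (range f)" by (rule cs_bounded)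
      ultimately show "(\<lambda>n. integral\<^sup>L (pos_part (\<mu>s n)) f - integral\<^sup>L (neg_part (\<mu>s n)) f)
          \<longlonglongrightarrow> integral\<^sup>L (pos_part \<mu>) f - integral\<^sup>L (neg_part \<mu>) f"
        using WP WN by (intro tendsto_diff) auto
    qed
    have c1: "continuous_on UNIV (\<lambda>x::'a. 1::real)" "bounded (range (\<lambda>x::'a. 1::real))" by auto
    have "(\<lambda>n. integral\<^sup>L (pos_part (\<mu>s n)) (\<lambda>x. 1::real) + integral\<^sup>L (neg_part (\<mu>s n)) (\<lambda>x. 1::real))
        \<longlonglongrightarrow> integral\<^sup>L (pos_part \<mu>) (\<lambda>x. 1::real) + integral\<^sup>L (neg_part \<mu>) (\<lambda>x. 1::real)"
      using WP[OF c1] WN[OF c1] by (rule tendsto_add)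
    then have "(\<lambda>n. tv_norm (\<mu>s n)) \<longlonglongrightarrow> tv_norm \<mu>"
      using fPn(3) fNn(3) fP(3) fN(3) by (simp add: tv_norm_def)
    then have "(\<lambda>n. ereal (tv_norm (\<mu>s n))) \<longlonglongrightarrow> ereal (tv_norm \<mu>)" by (simp add: lim_ereal)
    then have "limsup (\<lambda>n. ereal (tv_norm (\<mu>s n))) = ereal (tv_norm \<mu>)"
      by (intro lim_imp_Limsup) auto
    with V show "vague_conv \<mu>s \<mu> \<and> limsup (\<lambda>n. ereal (tv_norm (\<mu>s n))) \<le> ereal (tv_norm \<mu>)" by simp
  next
    assume R: "vague_conv \<mu>s \<mu> \<and> limsup (\<lambda>n. ereal (tv_norm (\<mu>s n))) \<le> ereal (tv_norm \<mu>)"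
    have vag: "\<And>f::'a \<Rightarrow> real. continuous_on UNIV f \<Longrightarrow> compact (closure {x. f x \<noteq> 0}) \<Longrightarrow>
        (\<lambda>n. integral\<^sup>L (pos_part (\<mu>s n)) f - integral\<^sup>L (neg_part (\<mu>s n)) f) \<longlonglongrightarrow>
          integral\<^sup>L (pos_part \<mu>) f - integral\<^sup>L (neg_part \<mu>) f"
      by (rule R[THEN conjunct1, unfolded vague_conv_def signed_integral_def, rule_format])
    have ls: "limsup (\<lambda>n. ereal (measure (pos_part (\<mu>s n)) UNIV + measure (neg_part (\<mu>s n)) UNIV))
        \<le> ereal (measure (pos_part \<mu>) UNIV + measure (neg_part \<mu>) UNIV)"
      using R[THEN conjunct2, unfolded tv_norm_def] .
    have ap: "\<And>e. e > 0 \<Longrightarrow> \<exists>h::'a \<Rightarrow> real. continuous_on UNIV h \<and> compact (closure {x. h x \<noteq> 0}) \<and> (\<forall>x. \<bar>h x\<bar> \<le> 1) \<and>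
        integral\<^sup>L (pos_part \<mu>) (\<lambda>x. 1 - h x) + integral\<^sup>L (neg_part \<mu>) (\<lambda>x. 1 + h x) \<le> e"
      by (rule approx_h[OF lc assms(3)])
    have W1: "weak_conv (\<lambda>n. pos_part (\<mu>s n)) (pos_part \<mu>)"
      by (rule core[OF fP(1,2) fN(1,2) fPn(1,2) fNn(1,2) vag ls ap])
    have vag': "\<And>f::'a \<Rightarrow> real. continuous_on UNIV f \<Longrightarrow> compact (closure {x. f x \<noteq> 0}) \<Longrightarrow>
        (\<lambda>n. integral\<^sup>L (neg_part (\<mu>s n)) f - integral\<^sup>L (pos_part (\<mu>s n)) f) \<longlonglongrightarrow>
          integral\<^sup>L (neg_part \<mu>) f - integral\<^sup>L (pos_part \<mu>) f"
    proof -
      fix f :: "'a \<Rightarrow> real" assume "continuous_on UNIV f" "compact (closure {x. f x \<noteq> 0})"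
      from tendsto_minus[OF vag[OF this]] show "(\<lambda>n. integral\<^sup>L (neg_part (\<mu>s n)) f - integral\<^sup>L (pos_part (\<mu>s n)) f) \<longlonglongrightarrow>
          integral\<^sup>L (neg_part \<mu>) f - integral\<^sup>L (pos_part \<mu>) f" by simp
    qed
    have ls': "limsup (\<lambda>n. ereal (measure (neg_part (\<mu>s n)) UNIV + measure (pos_part (\<mu>s n)) UNIV))
        \<le> ereal (measure (neg_part \<mu>) UNIV + measure (pos_part \<mu>) UNIV)"
      using ls by (simp add: add.commute)
    have ap': "\<exists>h::'a \<Rightarrow> real. continuous_on UNIV h \<and> compact (closure {x. h x \<noteq> 0}) \<and> (\<forall>x. \<bar>h x\<bar> \<le> 1) \<and>
        integral\<^sup>L (neg_part \<mu>) (\<lambda>x. 1 - h x) + integral\<^sup>L (pos_part \<mu>) (\<lambda>x. 1 + h x) \<le> e" if e: "e > 0" for e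
    proof -
      obtain h :: "'a \<Rightarrow> real" where h: "continuous_on UNIV h" "compact (closure {x. h x \<noteq> 0})" "\<forall>x. \<bar>h x\<bar> \<le> 1"
        "integral\<^sup>L (pos_part \<mu>) (\<lambda>x. 1 - h x) + integral\<^sup>L (neg_part \<mu>) (\<lambda>x. 1 + h x) \<le> e"
        using ap[OF e] by blast
      have "continuous_on UNIV (\<lambda>x. - h x)" using h(1) by (intro continuous_intros)
      moreover have "compact (closure {x. - h x \<noteq> 0})" using h(2) by simp
      moreover have "\<forall>x. \<bar>- h x\<bar> \<le> 1" using h(3) by simp
      moreover have "integral\<^sup>L (neg_part \<mu>) (\<lambda>x. 1 - - h x) + integral\<^sup>L (pos_part \<mu>) (\<lambda>x. 1 + - h x) \<le> e"
        using h(4) by simp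
      ultimately show ?thesis by blast
    qed
    have W2: "weak_conv (\<lambda>n. neg_part (\<mu>s n)) (neg_part \<mu>)"
      by (rule core[OF fN(1,2) fP(1,2) fNn(1,2) fPn(1,2) vag' ls' ap'])
    show "weak_conv (\<lambda>n. pos_part (\<mu>s n)) (pos_part \<mu>) \<and> weak_conv (\<lambda>n. neg_part (\<mu>s n)) (neg_part \<mu>)"
      using W1 W2 by blast
  qed
qed


end
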